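(* Let $(p,\mathcal{D})$ be a GNS over an order $\mathcal{O}$, let $\mathcal{F}$ be a fundamental domain associated with $(p,\mathcal{D})$, and let $\Delta=\mathcal{N}\cdot\boldsymbol{\omega}$. Then $(p,\mathcal{D})$ has the finiteness property if and only if for each $a\in R(p,\mathcal{D})$ and each $\alpha\in\Delta$ we have $a+\alpha\in R(p,\mathcal{D})$.
   Context: $\mathbb{K}$ is a number field of degree $k$, $\mathcal{O}$ an order in $\mathbb{K}$ with $\mathbb{Z}$-basis $\omega_1=1,\ldots,\omega_k$, $\boldsymbol{\omega}=(\omega_1,\ldots,\omega_k)$. A GNS over $\mathcal{O}$ is a pair $(p,\mathcal{D})$ with $p\in\mathcal{O}[x]$ monic and $\mathcal{D}\subset\mathcal{O}$ a complete residue system modulo $p(0)$ containing $0$. $R(p,\mathcal{D})$ is the set of $a\in\mathcal{O}[x]$ with $a\equiv\sum_{j=0}^{\ell-1}d_jx^j\pmod p$ for some $\ell\in\mathbb{N}$, $d_j\in\mathcal{D}$; finiteness property means $R(p,\mathcal{D})=\mathcal{O}[x]$. A fundamental domain associated with $(p,\mathcal{D})$ is a bounded set $\mathcal{F}\subset\mathbb{R}^k$ with $\mathbb{R}^k=\mathcal{F}+\mathbb{Z}^k$ disjointly and $\mathcal{D}=\{p(0)\sum_j f_j\omega_j:(f_1,\ldots,f_k)\in\mathcal{F}\}\cap\mathcal{O}$. $\mathcal{N}=\{\mathbf{z}\in\mathbb{Z}^k:\overline{\mathcal{F}}\cap(\overline{\mathcal{F}}+\mathbf{z})\neq\emptyset\}$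 and $\mathcal{N}\cdot\boldsymbol{\omega}=\{\sum_j z_j\omega_j:\mathbf{z}\in\mathcal{N}\}$. *)

theory Defs
  imports "HOL-Analysis.Analysis" "HOL-Computational_Algebra.Polynomial"
begin

text \<open>The number field K (degree k = CARD('n)) is realised inside the complex numbers.
  The order Or is the Z-span of a basis omega indexed by the finite type 'n.\<close>

definition lin_comb :: "('n::finite \<Rightarrow> complex) \<Rightarrow> real^'n \<Rightarrow> complex" where
  "lin_comb \<omega> f = (\<Sum>j\<in>UNIV. complex_of_real (f $ j) * \<omega> j)"

definition int_vecs :: "(real^'n::finite) set" where
  "int_vecs = {z. \<forall>j. z $ j \<in> \<int>}"

definition order_of :: "('n::finite \<Rightarrow> complex) \<Rightarrow> complex set" where
  "order_of \<omega> = lin_comb \<omega> ` int_vecs"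

text \<open>omega is a Z-basis (1 among its elements, Q-linearly independent) of a ring Or;
  then Or is an order in the number field K = Q(Or) of degree CARD('n).\<close>
definition order_basis :: "('n::finite \<Rightarrow> complex) \<Rightarrow> bool" where
  "order_basis \<omega> \<longleftrightarrow>
     (\<exists>i. \<omega> i = 1) \<and>
     (\<forall>c::'n \<Rightarrow> rat. (\<Sum>j\<in>UNIV. of_rat (c j) * \<omega> j) = 0 \<longrightarrow> (\<forall>j. c j = 0)) \<and>
     (\<forall>i j. \<omega> i * \<omega> j \<in> order_of \<omega>)"

definition O_poly :: "complex set \<Rightarrow> complex poly set" where
  "O_poly Or = {a. \<forall>i. coeff a i \<in> Or}"

definition cong_mod_poly :: "complex set \<Rightarrow> complex poly \<Rightarrow> complex poly \<Rightarrow> complex poly \<Rightarrow> bool" where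
  "cong_mod_poly Or p a b \<longleftrightarrow> (\<exists>q\<in>O_poly Or. a - b = q * p)"

definition GNS :: "complex set \<Rightarrow> complex poly \<Rightarrow> complex set \<Rightarrow> bool" where
  "GNS Or p D \<longleftrightarrow> p \<in> O_poly Or \<and> lead_coeff p = 1 \<and> D \<subseteq> Or \<and> 0 \<in> D \<and>
     (\<forall>a\<in>Or. \<exists>!d. d \<in> D \<and> (\<exists>t\<in>Or. a - d = poly p 0 * t))"

definition R_set :: "complex set \<Rightarrow> complex poly \<Rightarrow> complex set \<Rightarrow> complex poly set" where
  "R_set Or p D = {a \<in> O_poly Or. \<exists>(l::nat) (d::nat \<Rightarrow> complex). (\<forall>j<l. d j \<in> D) \<and>
        cong_mod_poly Or p a (\<Sum>j<l. monom (d j) j)}"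

definition finiteness_property :: "complex set \<Rightarrow> complex poly \<Rightarrow> complex set \<Rightarrow> bool" where
  "finiteness_property Or p D \<longleftrightarrow> R_set Or p D = O_poly Or"

definition fundamental_domain ::
  "('n::finite \<Rightarrow> complex) \<Rightarrow> complex poly \<Rightarrow> complex set \<Rightarrow> (real^'n) set \<Rightarrow> bool" where
  "fundamental_domain \<omega> p D F \<longleftrightarrow> bounded F \<and>
     (\<forall>x::real^'n. \<exists>!fz. fst fz \<in> F \<and> snd fz \<in> int_vecs \<and> x = fst fz + snd fz) \<and>
     D = ((\<lambda>f. poly p 0 * lin_comb \<omega> f) ` F) \<inter> order_of \<omega>"

definition Ncal :: "(real^'n::finite) set \<Rightarrow> (real^'n) set" where
  "Ncal F = {z \<in> int_vecs. closure F \<inter> ((\<lambda>x. x + z) ` closure F) \<noteq> {}}"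

definition Delta :: "('n::finite \<Rightarrow> complex) \<Rightarrow> (real^'n) set \<Rightarrow> complex set" where
  "Delta \<omega> F = lin_comb \<omega> ` Ncal F"

end

theory Submission
  imports Defs
begin

inductive_set gen_set :: "(real^'n::finite) set \<Rightarrow> (real^'n) set" for N where
  gen0: "0 \<in> gen_set N"
| genS: "s \<in> gen_set N \<Longrightarrow> n \<in> N \<Longrightarrow> s + n \<in> gen_set N"

lemma int_vecs_add: "x \<in> int_vecs \<Longrightarrow> y \<in> int_vecs \<Longrightarrow> x + y \<in> int_vecs"
  by (auto simp: int_vecs_def)

lemma int_vecs_neg: "x \<in> int_vecs \<Longrightarrow> - x \<in> int_vecs"
  by (auto simp: int_vecs_def)

lemma int_vecs_diff: "x \<in> int_vecs \<Longrightarrow> y \<in> int_vecs \<Longrightarrow> x - y \<in> int_vecs"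
  by (auto simp: int_vecs_def)

lemma int_vecs_0: "0 \<in> int_vecs"
  by (auto simp: int_vecs_def)

lemma lin_comb_add: "lin_comb \<omega> (x + y) = lin_comb \<omega> x + lin_comb \<omega> y"
  by (simp add: lin_comb_def distrib_right sum.distrib)

lemma lin_comb_0: "lin_comb \<omega> 0 = 0"
  by (simp add: lin_comb_def)

lemma order_add: "a \<in> order_of \<omega> \<Longrightarrow> b \<in> order_of \<omega> \<Longrightarrow> a + b \<in> order_of \<omega>"
proof -
  assume "a \<in> order_of \<omega>" "b \<in> order_of \<omega>"
  then obtain x y where "x \<in> int_vecs" "y \<in> int_vecs" "a = lin_comb \<omega> x" "b = lin_comb \<omega> y"
    by (auto simp: order_of_def)
  then show ?thesis unfolding order_of_def
    by (metis int_vecs_add lin_comb_add image_eqI)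
qed

lemma order_0: "0 \<in> order_of \<omega>"
  unfolding order_of_def using int_vecs_0 lin_comb_0 by (metis image_eqI)

lemma int_vecs_closed: "closed (S :: (real^'n::finite) set)" if "S \<subseteq> int_vecs"
proof (rule discrete_imp_closed[of 1])
  show "\<forall>x\<in>S. \<forall>y\<in>S. dist y x < 1 \<longrightarrow> y = x"
  proof (intro ballI impI)
    fix x y assume xy: "x \<in> S" "y \<in> S" "dist y x < 1"
    show "y = x"
    proof (rule vec_eq_iff[THEN iffD2], rule allI)
      fix j
      have "\<bar>(y - x) $ j\<bar> \<le> norm (y - x)" by (rule component_le_norm_cart)
      also have "\<dots> < 1" using xy(3) by (simp add: dist_norm)
      finally have lt: "\<bar>y $ j - x $ j\<bar> < 1" by simp
      have "x \<in> int_vecs" "y \<in> int_vecs" using xy that by auto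
      then have "y $ j - x $ j \<in> \<int>" by (auto simp: int_vecs_def intro!: Ints_diff)
      then obtain m where m: "y $ j - x $ j = of_int m" by (auto elim: Ints_cases)
      with lt have "m = 0" by simp
      with m show "y $ j = x $ j" by simp
    qed
  qed
qed simp

lemma gen_all:
  fixes F :: "(real^'n::finite) set"
  assumes bF: "bounded F"
    and tile: "\<forall>x::real^'n. \<exists>!fz. fst fz \<in> F \<and> snd fz \<in> int_vecs \<and> x = fst fz + snd fz"
  shows "int_vecs \<subseteq> gen_set (Ncal F)"
proof (rule ccontr)
  define C where "C = closure F"
  define S where "S = gen_set (Ncal F)"
  have NI: "Ncal F \<subseteq> int_vecs" by (auto simp: Ncal_def)
  have SI: "S \<subseteq> int_vecs"
  proof
    fix z assume "z \<in> S" then show "z \<in> int_vecs" unfolding S_def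
      by induct (use NI int_vecs_0 int_vecs_add in auto)
  qed
  have negN: "- n \<in> Ncal F" if "n \<in> Ncal F" for n
  proof -
    from that obtain c where c: "c \<in> C" "c + n \<in> C" "n \<in> int_vecs"
      by (auto simp: Ncal_def C_def)
    have "c + n + (- n) = c" by simp
    then have "closure F \<inter> (\<lambda>x. x + - n) ` closure F \<noteq> {}"
      using c unfolding C_def by (metis disjoint_iff image_eqI)
    with c(3) show ?thesis by (auto simp: Ncal_def int_vecs_neg)
  qed
  have cC: "compact C" unfolding C_def using bF by (simp add: compact_closure)
  define A where "A = (\<Union>x\<in>S. \<Union>y\<in>C. {x + y})"
  define B where "B = (\<Union>x\<in>int_vecs - S. \<Union>y\<in>C. {x + y})"
  have clA: "closed A" unfolding A_def
    by (rule closed_compact_sums[OF int_vecs_closed[OF SI] cC])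
  have clB: "closed B" unfolding B_def
    by (rule closed_compact_sums[OF int_vecs_closed cC]) auto
  have cov: "UNIV \<subseteq> A \<union> B"
  proof
    fix x :: "real^'n"
    from tile obtain f z where fz: "f \<in> F" "z \<in> int_vecs" "x = f + z"
      by (metis fst_conv snd_conv)
    have "f \<in> C" using fz(1) closure_subset unfolding C_def by blast
    have x: "x = z + f" using fz by (simp add: add.commute)
    show "x \<in> A \<union> B"
    proof (cases "z \<in> S")
      case True
      then have "x \<in> A" unfolding A_def x using \<open>f \<in> C\<close> by blast
      then show ?thesis by blast
    next
      case False
      then have "x \<in> B" unfolding B_def x using \<open>f \<in> C\<close> fz(2) by blast
      then show ?thesis by blast
    qed
  qed
  have disj: "A \<inter> B = {}"
  proof (rule ccontr)
    assume "A \<inter> B \<noteq> {}"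
    then obtain h c1 z c2 where h: "h \<in> S" "c1 \<in> C" "z \<in> int_vecs" "z \<notin> S" "c2 \<in> C"
       and eq: "h + c1 = z + c2"
      unfolding A_def B_def by blast
    have "c2 = c1 + (h - z)" using eq by (simp add: algebra_simps)
    then have "C \<inter> (\<lambda>x. x + (h - z)) ` C \<noteq> {}" using h by blast
    moreover have "h - z \<in> int_vecs" using h SI int_vecs_diff by blast
    ultimately have "h - z \<in> Ncal F" by (auto simp: Ncal_def C_def)
    then have "- (h - z) \<in> Ncal F" by (rule negN)
    then have "h + - (h - z) \<in> S" using h(1) unfolding S_def by (rule genS[rotated])
    then show False using h(4) by simp
  qed
  from tile obtain f0 z0 where f0: "f0 \<in> F" "z0 \<in> int_vecs" "(0::real^'n) = f0 + z0"
    by (metis fst_conv snd_conv)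
  have f0C: "f0 \<in> C" using f0(1) closure_subset unfolding C_def by blast
  have "0 \<in> S" unfolding S_def by (rule gen0)
  then have Ane: "A \<noteq> {}" using f0C unfolding A_def by blast
  assume "\<not> int_vecs \<subseteq> gen_set (Ncal F)"
  then obtain z where z: "z \<in> int_vecs" "z \<notin> S" unfolding S_def by blast
  then have Bne: "B \<noteq> {}" using f0C unfolding B_def by blast
  have "connected (UNIV :: (real^'n) set)" by (simp add: convex_connected)
  then show False
    unfolding connected_closed using clA clB cov disj Ane Bne by auto
qed

theorem mainTheorem7:
  fixes \<omega> :: "'n::finite \<Rightarrow> complex"
    and p :: "complex poly" and D :: "complex set" and F :: "(real^'n) set"
  assumes "order_basis \<omega>"
    and "GNS (order_of \<omega>) p D"
    and "fundamental_domain \<omega> p D F"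
  shows "finiteness_property (order_of \<omega>) p D \<longleftrightarrow>
    (\<forall>a\<in>R_set (order_of \<omega>) p D. \<forall>\<alpha>\<in>Delta \<omega> F.
        a + [:\<alpha>:] \<in> R_set (order_of \<omega>) p D)"
proof -
  let ?Or = "order_of \<omega>"
  let ?R = "R_set ?Or p D"
  have D0: "0 \<in> D" using assms(2) by (simp add: GNS_def)
  have bF: "bounded F" and tile: "\<forall>x::real^'n. \<exists>!fz. fst fz \<in> F \<and> snd fz \<in> int_vecs \<and> x = fst fz + snd fz"
    using assms(3) by (auto simp: fundamental_domain_def)
  have lcO: "lin_comb \<omega> z \<in> ?Or" if "z \<in> int_vecs" for z
    using that by (simp add: order_of_def)
  have DeltaO: "\<alpha> \<in> ?Or" if "\<alpha> \<in> Delta \<omega> F" for \<alpha>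
    using that lcO by (auto simp: Delta_def Ncal_def)
  have RO: "?R \<subseteq> O_poly ?Or" by (auto simp: R_set_def)
  have addO: "a + [:c:] \<in> O_poly ?Or" if "a \<in> O_poly ?Or" "c \<in> ?Or" for a c
  proof -
    have "coeff (a + [:c:]) i \<in> ?Or" for i
      using that order_add order_0 by (cases i) (auto simp: O_poly_def)
    then show ?thesis by (simp add: O_poly_def)
  qed
  show ?thesis
  proof
    assume fp: "finiteness_property ?Or p D"
    then have "?R = O_poly ?Or" by (simp add: finiteness_property_def)
    then show "\<forall>a\<in>?R. \<forall>\<alpha>\<in>Delta \<omega> F. a + [:\<alpha>:] \<in> ?R"
      using addO DeltaO by auto
  next
    assume H: "\<forall>a\<in>?R. \<forall>\<alpha>\<in>Delta \<omega> F. a + [:\<alpha>:] \<in> ?R"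
    have step1: "\<forall>a\<in>?R. a + [:lin_comb \<omega> z:] \<in> ?R" if "z \<in> gen_set (Ncal F)" for z
      using that
    proof induct
      case gen0
      then show ?case by (simp add: lin_comb_0)
    next
      case (genS s n)
      show ?case
      proof
        fix a assume a: "a \<in> ?R"
        have "a + [:lin_comb \<omega> s:] \<in> ?R" using genS a by blast
        moreover have "lin_comb \<omega> n \<in> Delta \<omega> F" using genS(3) by (simp add: Delta_def)
        ultimately have "(a + [:lin_comb \<omega> s:]) + [:lin_comb \<omega> n:] \<in> ?R" using H by blast
        then show "a + [:lin_comb \<omega> (s + n):] \<in> ?R" by (simp add: lin_comb_add add.assoc)
      qed
    qed
    have step2: "a + [:c:] \<in> ?R" if "c \<in> ?Or" "a \<in> ?R" for a c
    proof -
      from that(1) obtain z where "z \<in> int_vecs" "c = lin_comb \<omega> z" by (auto simp: order_of_def)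
      then show ?thesis using step1 gen_all[OF bF tile] that(2) by blast
    qed
    have step3: "pCons 0 a \<in> ?R" if "a \<in> ?R" for a
    proof -
      from that obtain q l d where a: "a \<in> O_poly ?Or" "\<forall>j<l. d j \<in> D" "q \<in> O_poly ?Or"
        "a - (\<Sum>j<l. monom (d j) j) = q * p"
        by (auto simp: R_set_def cong_mod_poly_def)
      define d' where "d' = (\<lambda>j. case j of 0 \<Rightarrow> 0 | Suc i \<Rightarrow> d i)"
      have d': "\<forall>j<Suc l. d' j \<in> D" using a(2) D0 by (auto simp: d'_def split: nat.split)
      have sm: "(\<Sum>j<Suc l. monom (d' j) j) = pCons 0 (\<Sum>j<l. monom (d j) j)"
      proof -
        have ps: "(\<Sum>j<m. pCons 0 (f j)) = pCons 0 (\<Sum>j<m. f j)" for m and f :: "nat \<Rightarrow> complex poly"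
          by (induct m) simp_all
        show ?thesis
          by (subst sum.lessThan_Suc_shift) (simp add: d'_def monom_Suc ps)
      qed
      have "pCons 0 a - (\<Sum>j<Suc l. monom (d' j) j) = pCons 0 q * p"
        unfolding sm using a(4) by (simp add: diff_pCons)
      moreover have "pCons 0 q \<in> O_poly ?Or" using a(3) order_0
        by (auto simp: O_poly_def coeff_pCons split: nat.split)
      moreover have "pCons 0 a \<in> O_poly ?Or" using a(1) order_0
        by (auto simp: O_poly_def coeff_pCons split: nat.split)
      ultimately show ?thesis using d' unfolding R_set_def cong_mod_poly_def by blast
    qed
    have R0: "0 \<in> ?R"
    proof -
      have "(0::complex poly) \<in> O_poly ?Or" using order_0 by (simp add: O_poly_def)
      moreover have "(0::complex poly) - (\<Sum>j<0. monom (d j) j) = 0 * p" for d :: "nat \<Rightarrow> complex" by simp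
      ultimately show ?thesis unfolding R_set_def cong_mod_poly_def by blast
    qed
    have "a \<in> ?R" if "a \<in> O_poly ?Or" for a
      using that
    proof (induct a rule: pCons_induct)
      case 0
      then show ?case using R0 by simp
    next
      case (pCons c b)
      have b: "b \<in> O_poly ?Or" using pCons(3) by (auto simp: O_poly_def) (metis coeff_pCons_Suc)
      have c: "c \<in> ?Or" using pCons(3) by (auto simp: O_poly_def) (metis coeff_pCons_0)
      have "pCons 0 b \<in> ?R" using step3 pCons(2) b by blast
      then have "pCons 0 b + [:c:] \<in> ?R" using step2 c by blast
      then show ?case by simp
    qed
    then show "finiteness_property ?Or p D" using RO by (auto simp: finiteness_property_def)
  qed
qed

end
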